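(* For $n\in\{0,1,2,\dots\}$ define \[ \omega_n=\begin{cases}\dfrac{2n+3}{n+1}\,\dfrac{\Gamma\left(\frac n2+1\right)}{\Gamma\left(\frac{n+1}{2}\right)}, & n\text{ odd},\\[3ex] (n+1)\dfrac{\Gamma\left(\frac{n+1}{2}\right)}{\Gamma\left(\frac n2+1\right)}, & n\text{ even}.\end{cases} \] Then the sequence $(\omega_n)_{n\ge0}$ is positive and strictly increasing, and the sequence $(\tau_n)_{n\ge0}$ given by $\tau_n=\omega_{n+1}-\omega_n$ is positive and non-increasing.
   Context: $\Gamma$ denotes the Gamma function. *)

theory Defs
  imports "HOL-Analysis.Analysis"
begin

definition omega :: "nat \<Rightarrow> real" where
  "omega n = (if odd n
     then (2 * real n + 3) / (real n + 1) * (Gamma (real n / 2 + 1) / Gamma ((real n + 1) / 2))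
     else (real n + 1) * (Gamma ((real n + 1) / 2) / Gamma (real n / 2 + 1)))"

definition tau :: "nat \<Rightarrow> real" where
  "tau n = omega (Suc n) - omega n"

end

theory Submission
  imports Defs
begin

lemma Gp1: "(x::real) > 0 \<Longrightarrow> Gamma (x + 1) = x * Gamma x"
  by (rule Gamma_plus1) (auto dest: nonpos_Ints_nonpos)

definition cc :: "nat \<Rightarrow> real" where
  "cc k = Gamma (real k + 1/2) / Gamma (real k + 1)"

lemma cc_pos: "cc k > 0"
  unfolding cc_def by (intro divide_pos_pos Gamma_real_pos) auto

lemma cc_Suc: "cc (Suc k) = cc k * (2 * real k + 1) / (2 * real k + 2)"
proof -
  have a: "Gamma (real (Suc k) + 1/2) = (real k + 1/2) * Gamma (real k + 1/2)"
    using Gp1[of "real k + 1/2"] by (simp add: algebra_simps)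
  have b: "Gamma (real (Suc k) + 1) = (real k + 1) * Gamma (real k + 1)"
    using Gp1[of "real k + 1"] by (simp add: algebra_simps)
  have p: "Gamma (real k + 1) > 0" by (intro Gamma_real_pos) auto
  show ?thesis unfolding cc_def a b using p by (simp add: field_simps)
qed

lemma om_even: "omega (2*k) = (2 * real k + 1) * cc k"
proof -
  have e1: "(real (2*k) + 1) / 2 = real k + 1/2" by (simp add: field_simps)
  have e2: "real (2*k) / 2 + 1 = real k + 1" by simp
  have e3: "(2 * real k + 1) / 2 = real k + 1/2" by (simp add: field_simps)
  have "omega (2*k) = (real (2*k) + 1) * (Gamma ((real (2*k) + 1) / 2) / Gamma (real (2*k) / 2 + 1))"
    unfolding omega_def by simp
  also have "\<dots> = (2 * real k + 1) * cc k" unfolding e1 e2 cc_def by simp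
  finally show ?thesis .
qed

lemma om_odd: "omega (2*k+1) = (4 * real k + 5) * (2 * real k + 1) / (4 * (real k + 1)) * cc k"
proof -
  have e1: "(real (2*k+1) + 1) / 2 = real k + 1" by simp
  have e2: "real (2*k+1) / 2 + 1 = (real k + 1/2) + 1" by (simp add: field_simps)
  have a: "Gamma ((real k + 1/2) + 1) = (real k + 1/2) * Gamma (real k + 1/2)"
    using Gp1[of "real k + 1/2"] by simp
  have p: "Gamma (real k + 1) > 0" by (intro Gamma_real_pos) auto
  show ?thesis unfolding omega_def cc_def e1 e2 a using p by (simp add: field_simps)
qed

lemma tau_even: "tau (2*k) = cc (Suc k) / 2"
  unfolding tau_def cc_Suc using om_odd[of k] om_even[of k]
  by (simp add: field_simps)

lemma tau_odd: "tau (2*k+1) = cc (Suc k) / 2"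
proof -
  have "omega (Suc (2*k+1)) = omega (2 * Suc k)" by simp
  also have "\<dots> = (2 * real k + 3) * (2 * real k + 1) / (2 * real k + 2) * cc k"
    unfolding om_even cc_Suc by (simp add: field_simps)
  finally show ?thesis unfolding tau_def om_odd cc_Suc by (simp add: field_simps)
qed

lemma tau_pos: "tau n > 0"
proof (cases "even n")
  case True then obtain k where "n = 2*k" by auto
  then show ?thesis using tau_even[of k] cc_pos[of "Suc k"] by simp
next
  case False then obtain k where "n = 2*k+1" using oddE by blast
  then show ?thesis using tau_odd[of k] cc_pos[of "Suc k"] by simp
qed

lemma omega_pos: "omega n > 0"
proof (cases "even n")
  case True then obtain k where "n = 2*k" by auto
  then show ?thesis using om_even cc_pos by (simp add: zero_less_mult_iff)
next
  case False then obtain k where "n = 2*k+1" using oddE by blast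
  then show ?thesis using om_odd[of k] cc_pos[of k] by (simp add: zero_less_mult_iff)
qed

lemma cc_dec: "cc (Suc k) \<le> cc k"
  using cc_pos[of k] unfolding cc_Suc by (simp add: field_simps)

lemma tau_mono: "tau (Suc n) \<le> tau n"
proof (cases "even n")
  case True then obtain k where "n = 2*k" by auto
  then show ?thesis using tau_even[of k] tau_odd[of k] by simp
next
  case False then obtain k where k: "n = 2*k+1" using oddE by blast
  then have "Suc n = 2 * Suc k" by simp
  then show ?thesis using k tau_even[of "Suc k"] tau_odd[of k] cc_dec[of "Suc k"] by simp
qed

theorem lemma6p4:
  shows "(\<forall>n. omega n > 0) \<and> (\<forall>n. omega n < omega (Suc n))
       \<and> (\<forall>n. tau n > 0) \<and> (\<forall>n. tau (Suc n) \<le> tau n)"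
  using omega_pos tau_pos tau_mono unfolding tau_def by auto

end
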